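(* Let $\Omega_n=\{1,2,\dots,n\}$, let $C_2,C_3,\dots,C_n$ be positive numbers, and let $\mu:2^{\Omega_n}\to[0,+\infty)$ satisfy \[ \mu(A)\leqslant\frac{1}{|A|}\sum_{k\in A}\mu(\{k\})+\frac{C_{|A|}}{|A|}\sum_{k\in A}\mu(\{k\})\,\mu(A\setminus\{k\}) \] for all $A\subset\Omega_n$ with $|A|\geqslant2$. Then for every nonempty $A\subset\Omega_n$, \[ \mu(A)\leqslant\frac{1}{|A|}\sum_{k\in A}\mu(\{k\})+\sum_{k=2}^{|A|}C_{|A|}C_{|A|-1}\cdots C_{|A|-k+2}\left(\frac{1}{|A|}\sum_{j\in A}\mu(\{j\})\right)^k. \] *)

theory Defs
  imports "HOL-Analysis.Analysis"
begin

end

theory Submission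
  imports Defs
begin

lemma amgm_pow:
  fixes x :: "'a \<Rightarrow> real"
  assumes "finite S" "S \<noteq> {}" "\<And>i. i \<in> S \<Longrightarrow> x i \<ge> 0"
  shows "(\<Prod>i\<in>S. x i) \<le> ((\<Sum>i\<in>S. x i) / card S) ^ card S"
proof -
  have cpos: "card S > 0" using assms by (simp add: card_gt_0_iff)
  have P0: "(\<Prod>i\<in>S. x i) \<ge> 0" using assms(3) by (simp add: prod_nonneg)
  have "(\<Prod>i\<in>S. x i) powr (1 / card S) \<le> (\<Sum>i\<in>S. x i / card S)"
    using arith_geom_mean[OF assms] .
  also have "\<dots> = (\<Sum>i\<in>S. x i) / card S" by (simp add: sum_divide_distrib)
  finally have h: "(\<Prod>i\<in>S. x i) powr (1 / card S) \<le> (\<Sum>i\<in>S. x i) / card S" .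
  have "(\<Prod>i\<in>S. x i) = ((\<Prod>i\<in>S. x i) powr (1 / card S)) ^ card S"
  proof (cases "(\<Prod>i\<in>S. x i) = 0")
    case True then show ?thesis using cpos by simp
  next
    case False
    then have "(\<Prod>i\<in>S. x i) > 0" using P0 by simp
    then show ?thesis using cpos
      by (simp add: powr_realpow[symmetric] powr_powr)
  qed
  also have "\<dots> \<le> ((\<Sum>i\<in>S. x i) / card S) ^ card S"
    by (intro power_mono h) simp
  finally show ?thesis .
qed

lemma L1:
  fixes w :: real and N :: nat
  assumes "0 \<le> w" "w \<le> 1" "N \<ge> 1"
  shows "(N+1) * (w * (1-w)^N) \<le> (N/(N+1))^N"
proof -
  define x where "x = (\<lambda>i::nat. if i = 0 then N*w else 1-w)"
  have "(\<Prod>i\<in>{0..N}. x i) \<le> ((\<Sum>i\<in>{0..N}. x i) / card {0..N}) ^ card {0..N}"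
    by (rule amgm_pow) (use assms in \<open>auto simp: x_def\<close>)
  moreover have "(\<Prod>i\<in>{0..N}. x i) = N*w*(1-w)^N"
    by (simp add: prod.atLeast_Suc_atMost x_def)
  moreover have "(\<Sum>i\<in>{0..N}. x i) = N"
    by (simp add: sum.atLeast_Suc_atMost x_def algebra_simps)
  ultimately have h: "N*w*(1-w)^N \<le> (N/(N+1))^(N+1)" by simp
  have "(N/(N+1))^(N+1) = (N/(N+1))^N * N / (N+1)" by simp
  with h have "N*(w*(1-w)^N) \<le> N * ((N/(N+1))^N / (N+1))" by (simp add: mult.assoc)
  then have "w*(1-w)^N \<le> (N/(N+1))^N / (N+1)"
    by (rule mult_left_le_imp_le) (use assms(3) in auto)
  then have "(N+1)*(w*(1-w)^N) \<le> (N+1) * ((N/(N+1))^N / (N+1))"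
    by (rule mult_left_mono) simp
  then show ?thesis by simp
qed

lemma L3:
  fixes z :: real and N j :: nat
  assumes "0 \<le> z" "1 \<le> j" "j \<le> N"
  shows "z^j \<le> (j * z^N + (N - j)) / N"
proof -
  define x where "x = (\<lambda>i::nat. if i < j then z^N else 1)"
  have "(\<Prod>i\<in>{0..<N}. x i) \<le> ((\<Sum>i\<in>{0..<N}. x i) / card {0..<N}) ^ card {0..<N}"
    by (rule amgm_pow) (use assms in \<open>auto simp: x_def\<close>)
  moreover have "{0..<N} \<inter> {i. i < j} = {0..<j}" "{0..<N} \<inter> - {i. i < j} = {j..<N}"
    using assms by auto
  moreover have "(\<Prod>i\<in>{0..<N}. x i) = (\<Prod>i\<in>{0..<N} \<inter> {i. i < j}. z^N) * (\<Prod>i\<in>{0..<N} \<inter> - {i. i < j}. 1)"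
    unfolding x_def by (rule prod.If_cases) simp
  moreover have "(\<Sum>i\<in>{0..<N}. x i) = (\<Sum>i\<in>{0..<N} \<inter> {i. i < j}. z^N) + (\<Sum>i\<in>{0..<N} \<inter> - {i. i < j}. 1)"
    unfolding x_def by (rule sum.If_cases) simp
  ultimately have h: "(z^j)^N \<le> ((j * z^N + (N - j)) / N) ^ N"
    using assms by (simp add: power_mult[symmetric] mult.commute of_nat_diff)
  obtain N' where N': "N = Suc N'" using assms by (cases N) auto
  show ?thesis
    by (rule power_le_imp_le_base[of _ N']) (use assms h N' in auto)
qed

lemma Lw:
  fixes w :: "'a \<Rightarrow> real" and N j :: nat
  assumes fin: "finite A" and cA: "card A = N + 1" and N1: "N \<ge> 1"
    and wpos: "\<And>k. k \<in> A \<Longrightarrow> w k \<ge> 0" and ws: "(\<Sum>k\<in>A. w k) = 1"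
    and j: "1 \<le> j" "j \<le> N"
  shows "(\<Sum>k\<in>A. w k * (1 - w k)^j) \<le> (N/(N+1))^j"
proof -
  define c :: real where "c = N/(N+1)"
  have c0: "c > 0" using N1 by (simp add: c_def)
  have w1: "w k \<le> 1" if "k \<in> A" for k
    using member_le_sum[of k A w] that wpos fin ws by auto
  define z where "z k = (1 - w k) / c" for k
  have z0: "z k \<ge> 0" if "k \<in> A" for k using w1[OF that] c0 by (simp add: z_def)
  have eachN: "w k * z k ^ N \<le> 1 / (N+1)" if "k \<in> A" for k
  proof -
    have "(N+1) * (w k * (1 - w k)^N) \<le> c^N"
      using L1[of "w k" N] wpos[OF that] w1[OF that] N1 by (simp add: c_def)
    moreover have "w k * z k ^ N = (w k * (1 - w k)^N) / c^N"
      by (simp add: z_def power_divide)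
    ultimately have "(N+1) * (w k * z k ^ N) \<le> c^N / c^N"
      using c0 by (simp add: divide_right_mono)
    then have "(N+1) * (w k * z k ^ N) \<le> 1" using c0 by simp
    then show ?thesis by (simp add: field_simps)
  qed
  have sN: "(\<Sum>k\<in>A. w k * z k ^ N) \<le> 1"
  proof -
    have "(\<Sum>k\<in>A. w k * z k ^ N) \<le> (\<Sum>k\<in>A. 1 / (N+1))"
      by (rule sum_mono) (rule eachN)
    also have "\<dots> = 1" using cA by simp
    finally show ?thesis .
  qed
  have "(\<Sum>k\<in>A. w k * z k ^ j) \<le> (\<Sum>k\<in>A. w k * ((j * z k ^ N + (N - j)) / N))"
    by (rule sum_mono, rule mult_left_mono) (use L3 z0 j wpos in auto)
  also have "\<dots> = (j * (\<Sum>k\<in>A. w k * z k ^ N) + (N - j) * (\<Sum>k\<in>A. w k)) / N"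
    by (simp add: sum_divide_distrib[symmetric] sum_distrib_left sum_distrib_right sum.distrib algebra_simps)
  also have "\<dots> \<le> (j * 1 + (N - j) * 1) / N"
  proof -
    have "j * (\<Sum>k\<in>A. w k * z k ^ N) \<le> j" using sN by (simp add: mult_left_le)
    then show ?thesis using ws by (intro divide_right_mono) auto
  qed
  also have "\<dots> = 1" using j by (simp add: of_nat_diff)
  finally have sj: "(\<Sum>k\<in>A. w k * z k ^ j) \<le> 1" .
  have "(\<Sum>k\<in>A. w k * (1 - w k)^j) = c^j * (\<Sum>k\<in>A. w k * z k ^ j)"
    using c0 by (simp add: z_def power_divide sum_distrib_left)
  also have "\<dots> \<le> c^j * 1" using sj c0 by (intro mult_left_mono) auto
  finally show ?thesis by (simp add: c_def)
qed

lemma Lmu: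
  fixes \<mu> :: "'a \<Rightarrow> real" and N j :: nat
  assumes fin: "finite A" and cA: "card A = N + 1" and N1: "N \<ge> 1"
    and mpos: "\<And>k. k \<in> A \<Longrightarrow> \<mu> k \<ge> 0"
    and j: "1 \<le> j" "j \<le> N"
  shows "(\<Sum>k\<in>A. \<mu> k * (((\<Sum>i\<in>A. \<mu> i) - \<mu> k) / N)^j)
     \<le> (N+1) * ((\<Sum>i\<in>A. \<mu> i) / (N+1))^(j+1)"
proof (cases "(\<Sum>i\<in>A. \<mu> i) = 0")
  case True
  then have "\<forall>k\<in>A. \<mu> k = 0" using sum_nonneg_eq_0_iff[OF fin] mpos by blast
  then show ?thesis using True j by simp
next
  case False
  define s where "s = (\<Sum>i\<in>A. \<mu> i)"
  have s0: "s > 0" using False sum_nonneg[of A \<mu>] mpos unfolding s_def by force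
  define w where "w k = \<mu> k / s" for k
  have ws: "(\<Sum>k\<in>A. w k) = 1" using s0 by (simp add: w_def sum_divide_distrib[symmetric] s_def)
  have B: "(\<Sum>k\<in>A. w k * (1 - w k)^j) \<le> (N/(N+1))^j"
    by (rule Lw[OF fin cA N1 _ ws j]) (use mpos s0 in \<open>simp add: w_def\<close>)
  have eq: "\<mu> k * ((s - \<mu> k) / N)^j = (s^(j+1) / N^j) * (w k * (1 - w k)^j)" if "k \<in> A" for k
  proof -
    have "\<mu> k = s * w k" "s - \<mu> k = s * (1 - w k)" using s0 by (auto simp: w_def field_simps)
    then show ?thesis by (simp add: power_mult_distrib power_divide)
  qed
  have "(\<Sum>k\<in>A. \<mu> k * ((s - \<mu> k) / N)^j) = (s^(j+1) / N^j) * (\<Sum>k\<in>A. w k * (1 - w k)^j)"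
    using eq by (simp add: sum_distrib_left)
  also have "\<dots> \<le> (s^(j+1) / N^j) * (N/(N+1))^j"
    using B s0 by (intro mult_left_mono) auto
  also have "\<dots> = (N+1) * (s / (N+1))^(j+1)"
  proof -
    define t :: real where "t = N + 1"
    have t0: "t > 0" "real N ^ j > 0" using N1 by (auto simp: t_def)
    have "(s^(j+1) / N^j) * (N/t)^j = s^(j+1) / t^j"
      using t0 by (simp add: power_divide)
    also have "\<dots> = t * (s / t)^(j+1)"
      using t0 by (simp add: power_divide)
    finally show ?thesis by (simp add: t_def)
  qed
  finally show ?thesis unfolding s_def .
qed

lemma Grec:
  fixes C :: "nat \<Rightarrow> real" and x :: real
  assumes "2 \<le> m"
  shows "(\<Sum>k=1..m. (\<Prod>i=m-k+2..m. C i) * x^k)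
       = x + C m * x * (\<Sum>k=1..m-1. (\<Prod>i=(m-1)-k+2..m-1. C i) * x^k)"
proof -
  obtain p where p: "m = Suc p" and p1: "p \<ge> 1" using assms by (cases m) auto
  have "(\<Sum>k=1..m. (\<Prod>i=m-k+2..m. C i) * x^k) = x + (\<Sum>k=Suc 1..Suc p. (\<Prod>i=m-k+2..m. C i) * x^k)"
    using p by (simp add: sum.atLeast_Suc_atMost)
  also have "(\<Sum>k=Suc 1..Suc p. (\<Prod>i=m-k+2..m. C i) * x^k) = (\<Sum>k=1..p. (\<Prod>i=m-Suc k+2..m. C i) * x^Suc k)"
    by (rule sum.shift_bounds_cl_Suc_ivl)
  also have "\<dots> = (\<Sum>k=1..p. C m * x * ((\<Prod>i=p-k+2..p. C i) * x^k))"
  proof (rule sum.cong[OF refl])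
    fix k assume k: "k \<in> {1..p}"
    have e: "m - Suc k + 2 = Suc (p - k + 1)" "p - k + 2 = Suc (p - k + 1)" using k p by auto
    have "(\<Prod>i=Suc (p-k+1)..Suc p. C i) = C (Suc p) * (\<Prod>i=Suc (p-k+1)..p. C i)"
      using k by (auto simp: prod.cl_ivl_Suc)
    then show "(\<Prod>i=m-Suc k+2..m. C i) * x^Suc k = C m * x * ((\<Prod>i=p-k+2..p. C i) * x^k)"
      using e p by simp
  qed
  finally show ?thesis using p by (simp add: sum_distrib_left)
qed

theorem proposition1:
  fixes n :: nat and C :: "nat \<Rightarrow> real" and \<mu> :: "nat set \<Rightarrow> real"
  assumes Cpos: "\<And>m. 2 \<le> m \<Longrightarrow> m \<le> n \<Longrightarrow> C m > 0"
    and \<mu>nonneg: "\<And>A. A \<subseteq> {1..n} \<Longrightarrow> \<mu> A \<ge> 0"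
    and hyp: "\<And>A. A \<subseteq> {1..n} \<Longrightarrow> card A \<ge> 2 \<Longrightarrow>
      \<mu> A \<le> (1 / real (card A)) * (\<Sum>k\<in>A. \<mu> {k})
             + (C (card A) / real (card A)) * (\<Sum>k\<in>A. \<mu> {k} * \<mu> (A - {k}))"
    and A: "A \<subseteq> {1..n}" "A \<noteq> {}"
  shows "\<mu> A \<le> (1 / real (card A)) * (\<Sum>k\<in>A. \<mu> {k})
           + (\<Sum>k=2..card A. (\<Prod>i=card A - k + 2..card A. C i)
                * ((1 / real (card A)) * (\<Sum>j\<in>A. \<mu> {j})) ^ k)"
proof -
  define G where "G N x = (\<Sum>k=1..N. (\<Prod>i=N-k+2..N. C i) * x^k)" for N :: nat and x :: real
  define av where "av B = (1 / real (card B)) * (\<Sum>j\<in>B. \<mu> {j})" for B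
  have claim: "\<forall>B. B \<subseteq> {1..n} \<longrightarrow> card B = m \<longrightarrow> m \<ge> 1 \<longrightarrow> \<mu> B \<le> G m (av B)" for m
  proof (induction m)
    case 0
    then show ?case by simp
  next
    case (Suc m)
    show ?case
    proof (intro allI impI)
      fix B assume B: "B \<subseteq> {1..n}" "card B = Suc m" "Suc m \<ge> 1"
      have fin: "finite B" using B(1) finite_subset by blast
      have Mn: "Suc m \<le> n" using card_mono[OF _ B(1)] B(2) by simp
      show "\<mu> B \<le> G (Suc m) (av B)"
      proof (cases "m = 0")
        case True
        then obtain a where a: "B = {a}" using B(2) card_1_singletonE by auto
        then show ?thesis using True by (simp add: G_def av_def)
      next
        case False
        then have m1: "m \<ge> 1" by simp
        define s where "s = (\<Sum>j\<in>B. \<mu> {j})"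
        have mpos: "\<mu> {k} \<ge> 0" if "k \<in> B" for k using \<mu>nonneg B(1) that by auto
        have CM: "C (Suc m) > 0" using Cpos m1 Mn by auto
        have Pnn: "(\<Prod>i=m-j+2..m. C i) \<ge> 0" if "j \<in> {1..m}" for j
          using that Mn by (intro prod_nonneg) (auto intro!: less_imp_le[OF Cpos])
        have IH: "\<mu> (B - {k}) \<le> G m ((s - \<mu> {k}) / m)" if k: "k \<in> B" for k
        proof -
          have c: "card (B - {k}) = m" using B(2) k fin by simp
          have "(\<Sum>j\<in>B - {k}. \<mu> {j}) = s - \<mu> {k}"
            using sum.remove[OF fin k, of "\<lambda>j. \<mu> {j}"] by (simp add: s_def)
          then have "av (B - {k}) = (s - \<mu> {k}) / m" using c by (simp add: av_def)
          moreover have "B - {k} \<subseteq> {1..n}" using B(1) by blast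
          moreover have "\<mu> (B - {k}) \<le> G m (av (B - {k}))"
            using Suc.IH c m1 \<open>B - {k} \<subseteq> {1..n}\<close> by blast
          ultimately show ?thesis by simp
        qed
        have h: "\<mu> B \<le> (1 / real (Suc m)) * s + (C (Suc m) / real (Suc m)) * (\<Sum>k\<in>B. \<mu> {k} * \<mu> (B - {k}))"
          using hyp[OF B(1)] B(2) m1 by (simp add: s_def)
        have "(\<Sum>k\<in>B. \<mu> {k} * \<mu> (B - {k})) \<le> (\<Sum>k\<in>B. \<mu> {k} * G m ((s - \<mu> {k}) / m))"
          by (intro sum_mono mult_left_mono IH mpos)
        also have "\<dots> = (\<Sum>j=1..m. (\<Prod>i=m-j+2..m. C i) * (\<Sum>k\<in>B. \<mu> {k} * ((s - \<mu> {k}) / m)^j))"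
        proof -
          have "(\<Sum>k\<in>B. \<mu> {k} * G m ((s - \<mu> {k}) / m)) = (\<Sum>k\<in>B. \<Sum>j=1..m. (\<Prod>i=m-j+2..m. C i) * (\<mu> {k} * ((s - \<mu> {k}) / m)^j))"
            unfolding G_def by (simp add: sum_distrib_left mult.left_commute)
          also have "\<dots> = (\<Sum>j=1..m. \<Sum>k\<in>B. (\<Prod>i=m-j+2..m. C i) * (\<mu> {k} * ((s - \<mu> {k}) / m)^j))"
            by (rule sum.swap)
          finally show ?thesis by (simp add: sum_distrib_left)
        qed
        also have "\<dots> \<le> (\<Sum>j=1..m. (\<Prod>i=m-j+2..m. C i) * ((m+1) * (s / (m+1))^(j+1)))"
        proof (intro sum_mono mult_left_mono Pnn)
          fix j assume j: "j \<in> {1..m}"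
          show "(\<Sum>k\<in>B. \<mu> {k} * ((s - \<mu> {k}) / m)^j) \<le> (m+1) * (s / (m+1))^(j+1)"
            using Lmu[OF fin _ m1, of "\<lambda>k. \<mu> {k}" j] B(2) mpos j by (simp add: s_def)
        qed
        also have "\<dots> = (m+1) * (s / (m+1)) * G m (s / (m+1))"
        proof -
          have "(\<Sum>j=1..m. (\<Prod>i=m-j+2..m. C i) * ((m+1) * (s / (m+1))^(j+1)))
             = (\<Sum>j=1..m. ((m+1) * (s / (m+1))) * ((\<Prod>i=m-j+2..m. C i) * (s / (m+1))^j))"
            by (rule sum.cong[OF refl]) (simp only: power_Suc Suc_eq_plus1[symmetric] mult_ac)
          then show ?thesis unfolding G_def by (simp only: sum_distrib_left)
        qed
        finally have S: "(\<Sum>k\<in>B. \<mu> {k} * \<mu> (B - {k})) \<le> (m+1) * (s / (m+1)) * G m (s / (m+1))" .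
        have avB: "av B = s / (m+1)" using B(2) by (simp add: av_def s_def)
        have "\<mu> B \<le> s / (m+1) + (C (Suc m) / (m+1)) * ((m+1) * (s / (m+1)) * G m (s / (m+1)))"
          using h mult_left_mono[OF S, of "C (Suc m) / real (Suc m)"] CM by simp
        also have "\<dots> = s / (m+1) + C (Suc m) * (s / (m+1)) * G m (s / (m+1))"
          by simp
        also have "\<dots> = G (Suc m) (s / (m+1))"
          unfolding G_def using Grec[of "Suc m" C "s / (m+1)"] m1 by simp
        finally show ?thesis using avB by simp
      qed
    qed
  qed
  have cA: "card A \<ge> 1" using A finite_subset[OF A(1)] by (simp add: Suc_le_eq card_gt_0_iff)
  have "\<mu> A \<le> G (card A) (av A)" using claim A(1) cA by blast
  also have "G (card A) (av A) = av A + (\<Sum>k=2..card A. (\<Prod>i=card A - k + 2..card A. C i) * av A ^ k)"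
    unfolding G_def using cA by (simp add: sum.atLeast_Suc_atMost numeral_2_eq_2)
  finally show ?thesis by (simp add: av_def)
qed

end
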